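(* In the linear setting of the context, for all $\lambda>0$, $\sigma\in(0,1)$ and $\theta\ge0$, there exists $\tau>0$ such that for all initial conditions $x(0)\in\mathbb{R}^n$ the execution times generated by the dynamic event generator satisfy $t_{i+1}-t_i\ge\tau$ for all $i\in\mathbb I$. Moreover $x(t)\to0$ and $\eta(t)\to0$ as $t\to\infty$. If in addition $\lambda=(1-\sigma)\kappa$, then for all $t\ge0$, $V(x(t))\le V(x(0))e^{(\sigma-1)\kappa t}$.
   Context: Consider $\dot x=Ax+Bu$, $x\in\mathbb{R}^n$, $u\in\mathbb{R}^m$, and a gain $K$ such that $A+BK$ is Hurwitz; let $P,Q$ be symmetric positive definite with $(A+BK)^\top P+P(A+BK)=-Q$, $V(x)=x^\top Px$, and let $\kappa>0$ be such that $Q\ge\kappa P$. The input is $u(t)=Kx(t_i)$ for $t\in[t_i,t_{i+1})$, with $e(t)=x(t_i)-x(t)$, so $\dot x=Ax+BK(x+e)$. If infinitely many executions, $\mathbb I=\mathbb N$; otherwise $\mathbb I=\{0,\dots,I\}$. $g(t^-)$ is the left limit. Dynamic event generator with parameters $\sigma\in(0,1)$, $\lambda>0$, $\theta\ge0$: $\dot\eta=-\lambda\eta+\sigma x^\top Qx-2x^\top PBKe$, $\eta(0)=0$; $t_0=0$, $t_{i+1}=\inf\{t>t_i:\ \eta(t)+\theta(\sigma x(t)^\top Qx(t)-2x(t)^\top PBKe(t^-))\le0\}$. Assume $x(t_i)\ne0$ for all $i$. *)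

theory Defs
  imports "HOL-Analysis.Analysis"
begin

definition quad :: "real^'n^'n \<Rightarrow> real^'n \<Rightarrow> real" where
  "quad M v = v \<bullet> (M *v v)"

definition sym_pos_def :: "real^'n^'n \<Rightarrow> bool" where
  "sym_pos_def M \<longleftrightarrow> transpose M = M \<and> (\<forall>v. v \<noteq> 0 \<longrightarrow> quad M v > 0)"

definition hurwitz :: "real^'n^'n \<Rightarrow> bool" where
  "hurwitz M \<longleftrightarrow>
     (\<forall>(l::complex) (v::complex^'n). v \<noteq> 0 \<and>
        (\<chi> i j. complex_of_real (M $ i $ j)) *v v = l *s v \<longrightarrow> Re l < 0)"

definition seg :: "nat set \<Rightarrow> (nat \<Rightarrow> real) \<Rightarrow> nat \<Rightarrow> real set" where
  "seg I t i = (if Suc i \<in> I then {t i..<t (Suc i)} else {t i..})"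

definition sample_idx :: "nat set \<Rightarrow> (nat \<Rightarrow> real) \<Rightarrow> real \<Rightarrow> nat" where
  "sample_idx I t s = (THE i. i \<in> I \<and> s \<in> seg I t i)"

definition err :: "nat set \<Rightarrow> (nat \<Rightarrow> real) \<Rightarrow> (real \<Rightarrow> real^'n) \<Rightarrow> real \<Rightarrow> real^'n" where
  "err I t x s = x (t (sample_idx I t s)) - x s"

definition trig_set ::
  "real^'m^'n \<Rightarrow> real^'n^'m \<Rightarrow> real^'n^'n \<Rightarrow> real^'n^'n \<Rightarrow> real \<Rightarrow> real \<Rightarrow>
   (real \<Rightarrow> real^'n) \<Rightarrow> (real \<Rightarrow> real) \<Rightarrow> (nat \<Rightarrow> real) \<Rightarrow> nat set \<Rightarrow> nat \<Rightarrow> real set" where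
  "trig_set B K P Q sig th x eta t I i =
     {s. s > t i \<and>
         eta s + th * (sig * quad Q (x s)
            - 2 * (x s \<bullet> (P *v (B *v (K *v (Lim (at_left s) (err I t x))))))) \<le> 0}"

definition event_solution ::
  "real^'n^'n \<Rightarrow> real^'m^'n \<Rightarrow> real^'n^'m \<Rightarrow> real^'n^'n \<Rightarrow> real^'n^'n \<Rightarrow>
   real \<Rightarrow> real \<Rightarrow> real \<Rightarrow>
   (real \<Rightarrow> real^'n) \<Rightarrow> (real \<Rightarrow> real) \<Rightarrow> (nat \<Rightarrow> real) \<Rightarrow> nat set \<Rightarrow> bool" where
  "event_solution A B K P Q lam sig th x eta t I \<longleftrightarrow>
     (I = UNIV \<or> (\<exists>N. I = {0..N})) \<and>
     t 0 = 0 \<and> (\<forall>i. Suc i \<in> I \<longrightarrow> t i < t (Suc i)) \<and>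
     continuous_on {0..} x \<and> continuous_on {0..} eta \<and> eta 0 = 0 \<and>
     (\<forall>i\<in>I. \<forall>s\<in>seg I t i.
        (x has_vector_derivative (A *v x s + B *v (K *v x (t i)))) (at s within seg I t i) \<and>
        (eta has_real_derivative
           (- lam * eta s + sig * quad Q (x s)
            - 2 * (x s \<bullet> (P *v (B *v (K *v (x (t i) - x s)))))))
           (at s within seg I t i)) \<and>
     (\<forall>i\<in>I. Suc i \<in> I \<longrightarrow>
        trig_set B K P Q sig th x eta t I i \<noteq> {} \<and>
        t (Suc i) = Inf (trig_set B K P Q sig th x eta t I i)) \<and>
     (\<forall>i\<in>I. Suc i \<notin> I \<longrightarrow> trig_set B K P Q sig th x eta t I i = {}) \<and>
     (\<forall>i\<in>I. x (t i) \<noteq> 0)"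

end

theory Submission
  imports Defs "HOL-Real_Asymp.Real_Asymp"
begin


lemma inner_sym_mat:
  fixes P :: "real^'n^'n"
  assumes "transpose P = P"
  shows "u \<bullet> (P *v v) = v \<bullet> (P *v u)"
proof -
  have "u \<bullet> (P *v v) = (u v* P) \<bullet> v" by (simp add: dot_lmul_matrix)
  also have "u v* P = P *v u" using vector_transpose_matrix[of u P] assms by simp
  finally show ?thesis by (simp add: inner_commute)
qed

lemma inner_transpose_mat:
  fixes F :: "real^'n^'n"
  shows "v \<bullet> (transpose F *v w) = (F *v v) \<bullet> w"
proof -
  have "v \<bullet> (transpose F *v w) = (w v* F) \<bullet> v" by (simp add: inner_commute)
  also have "\<dots> = w \<bullet> (F *v v)" by (simp add: dot_lmul_matrix)
  finally show ?thesis by (simp add: inner_commute)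
qed

lemma mat_neg_mv: "(- (X::real^'n^'n)) *v v = - (X *v v)"
  by (simp add: matrix_vector_mult_def vec_eq_iff sum_negf)

lemma lyap_quad:
  fixes F P Q :: "real^'n^'n"
  assumes "transpose P = P" and "transpose F ** P + P ** F = - Q"
  shows "2 * (v \<bullet> (P *v (F *v v))) = - quad Q v"
proof -
  have "Q *v v = - ((transpose F ** P + P ** F) *v v)"
  proof -
    have "Q = - (transpose F ** P + P ** F)" using assms(2) by simp
    hence "Q *v v = (- (transpose F ** P + P ** F)) *v v" by simp
    also have "\<dots> = - ((transpose F ** P + P ** F) *v v)" by (rule mat_neg_mv)
    finally show ?thesis .
  qed
  also have "\<dots> = - (transpose F *v (P *v v) + P *v (F *v v))"
    by (simp add: matrix_vector_mult_add_rdistrib matrix_vector_mul_assoc)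
  finally have "quad Q v = - (v \<bullet> (transpose F *v (P *v v)) + v \<bullet> (P *v (F *v v)))"
    unfolding quad_def by (simp add: inner_add_right inner_diff_right)
  moreover have "v \<bullet> (transpose F *v (P *v v)) = v \<bullet> (P *v (F *v v))"
    using inner_transpose_mat[of v F "P *v v"] inner_sym_mat[OF assms(1), of "F *v v" v]
    by (simp add: inner_commute)
  ultimately show ?thesis by simp
qed

lemma quad_lower:
  fixes M :: "real^'n^'n"
  assumes "sym_pos_def M"
  shows "\<exists>m>0. \<forall>v. quad M v \<ge> m * norm v ^ 2"
proof -
  have cont: "continuous_on (sphere 0 1) (quad M)"
    unfolding quad_def by (intro continuous_intros)
  have ne: "sphere (0::real^'n) 1 \<noteq> {}"
    by (simp add: sphere_eq_empty)
  obtain u where u: "u \<in> sphere 0 1" and umin: "\<forall>y\<in>sphere 0 1. quad M u \<le> quad M y"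
    using continuous_attains_inf[OF compact_sphere ne cont] by blast
  have "u \<noteq> 0" using u by auto
  hence pos: "quad M u > 0" using assms unfolding sym_pos_def_def by auto
  have "quad M v \<ge> quad M u * norm v ^ 2" for v
  proof (cases "v = 0")
    case True then show ?thesis by (simp add: quad_def)
  next
    case False
    let ?w = "(1 / norm v) *\<^sub>R v"
    have "?w \<in> sphere 0 1" using False by simp
    hence "quad M u \<le> quad M ?w" using umin by blast
    also have "quad M ?w = quad M v / norm v ^ 2"
      unfolding quad_def by (simp add: matrix_vector_mult_scaleR power2_eq_square)
    finally show ?thesis using False by (simp add: field_simps)
  qed
  thus ?thesis using pos by blast
qed

lemma mat_bound:
  fixes M :: "real^'n^'m"
  shows "\<exists>c>0. \<forall>v. norm (M *v v) \<le> c * norm v"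
proof -
  obtain c where "\<forall>v. norm (M *v v) \<le> c * norm v"
    using linear_bounded[OF matrix_vector_mul_linear[of M]] by blast
  hence "\<forall>v. norm (M *v v) \<le> (max c 1) * norm v"
    by (meson dual_order.trans max.cobounded1 mult_right_mono norm_ge_zero)
  thus ?thesis by (intro exI[of _ "max c 1"]) auto
qed

lemma vderiv_at_open:
  "(f has_vector_derivative f') (at s within S) \<Longrightarrow> U \<subseteq> S \<Longrightarrow> open U \<Longrightarrow> s \<in> U
   \<Longrightarrow> (f has_vector_derivative f') (at s)"
  by (metis has_vector_derivative_within_subset at_within_open)

lemma rderiv_at_open:
  "(f has_real_derivative f') (at s within S) \<Longrightarrow> U \<subseteq> S \<Longrightarrow> open U \<Longrightarrow> s \<in> U
   \<Longrightarrow> (f has_real_derivative f') (at s)"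
  by (metis has_field_derivative_subset at_within_open)

locale es =
  fixes A :: "real^'n^'n" and B :: "real^'m^'n" and K :: "real^'n^'m"
    and P Q :: "real^'n^'n" and kappa lam sig th :: real
    and x :: "real \<Rightarrow> real^'n" and eta :: "real \<Rightarrow> real" and t :: "nat \<Rightarrow> real"
    and I :: "nat set"
  assumes symP: "transpose P = P"
   and lyap: "transpose (A + B ** K) ** P + P ** (A + B ** K) = - Q"
   and QP: "\<forall>v. quad Q v \<ge> kappa * quad P v"
   and posP: "sym_pos_def P"
   and kappa: "kappa > 0" and lam: "lam > 0" and sig0: "0 < sig" and sig1: "sig < 1"
   and th: "th \<ge> 0"
   and sol: "event_solution A B K P Q lam sig th x eta t I"
begin

lemma I_form: "I = UNIV \<or> (\<exists>N. I = {0..N})" using sol unfolding event_solution_def by blast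
lemma t0: "t 0 = 0" using sol unfolding event_solution_def by blast
lemma tstep: "Suc i \<in> I \<Longrightarrow> t i < t (Suc i)" using sol unfolding event_solution_def by blast
lemma xcont: "continuous_on {0..} x" using sol unfolding event_solution_def by blast
lemma etacont: "continuous_on {0..} eta" using sol unfolding event_solution_def by blast
lemma eta0: "eta 0 = 0" using sol unfolding event_solution_def by blast
lemma ode: "i \<in> I \<Longrightarrow> s \<in> seg I t i \<Longrightarrow>
   (x has_vector_derivative (A *v x s + B *v (K *v x (t i)))) (at s within seg I t i) \<and>
   (eta has_real_derivative
           (- lam * eta s + sig * quad Q (x s)
            - 2 * (x s \<bullet> (P *v (B *v (K *v (x (t i) - x s)))))))
           (at s within seg I t i)"
  using sol unfolding event_solution_def by blast
lemma trig_next: "i \<in> I \<Longrightarrow> Suc i \<in> I \<Longrightarrow>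
   trig_set B K P Q sig th x eta t I i \<noteq> {} \<and> t (Suc i) = Inf (trig_set B K P Q sig th x eta t I i)"
  using sol unfolding event_solution_def by blast
lemma trig_last: "i \<in> I \<Longrightarrow> Suc i \<notin> I \<Longrightarrow> trig_set B K P Q sig th x eta t I i = {}"
  using sol unfolding event_solution_def by blast
lemma xnz: "i \<in> I \<Longrightarrow> x (t i) \<noteq> 0"
  using sol unfolding event_solution_def by blast

lemma I_down: "j \<in> I \<Longrightarrow> i \<le> j \<Longrightarrow> i \<in> I"
  using I_form by auto

lemma I0: "0 \<in> I" using I_form by auto

lemma t_le: "j \<in> I \<Longrightarrow> i < j \<Longrightarrow> t (Suc i) \<le> t j"
proof (induction j)
  case 0 then show ?case by simp
next
  case (Suc j)
  show ?case
  proof (cases "i = j")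
    case True then show ?thesis by simp
  next
    case False
    hence "i < j" using Suc.prems by simp
    moreover have "j \<in> I" using I_down[OF Suc.prems(1)] by simp
    ultimately have "t (Suc i) \<le> t j" using Suc.IH by simp
    also have "t j < t (Suc j)" using tstep Suc.prems by simp
    finally show ?thesis by simp
  qed
qed

lemma t_less: "j \<in> I \<Longrightarrow> i < j \<Longrightarrow> t i < t j"
  using tstep[of i] I_down[of j "Suc i"] t_le[of j i] by fastforce

lemma t_nonneg: "i \<in> I \<Longrightarrow> t i \<ge> 0"
  using t_less[of i 0] t0 by (cases "i = 0") auto

lemma seg_ge: "s \<in> seg I t i \<Longrightarrow> t i \<le> s"
  unfolding seg_def by (auto split: if_splits)

lemma seg_lt: "Suc i \<in> I \<Longrightarrow> s \<in> seg I t i \<Longrightarrow> s < t (Suc i)"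
  unfolding seg_def by (auto split: if_splits)

lemma seg_unique: "i \<in> I \<Longrightarrow> j \<in> I \<Longrightarrow> s \<in> seg I t i \<Longrightarrow> s \<in> seg I t j \<Longrightarrow> i = j"
proof -
  have *: "False" if "i \<in> I" "j \<in> I" "s \<in> seg I t i" "s \<in> seg I t j" "i < j" for i j
  proof -
    have "Suc i \<in> I" using I_down that by simp
    hence "s < t (Suc i)" using seg_lt that by blast
    also have "\<dots> \<le> t j" using t_le that by blast
    also have "\<dots> \<le> s" using seg_ge that by blast
    finally show False by simp
  qed
  assume "i \<in> I" "j \<in> I" "s \<in> seg I t i" "s \<in> seg I t j"
  thus "i = j" using *[of i j] *[of j i] by (cases "i < j"; cases "j < i") auto
qed

lemma sample_idx_eq: "i \<in> I \<Longrightarrow> s \<in> seg I t i \<Longrightarrow> sample_idx I t s = i"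
  unfolding sample_idx_def by (rule the_equality) (use seg_unique in auto)

lemma err_eq: "i \<in> I \<Longrightarrow> s \<in> seg I t i \<Longrightarrow> err I t x s = x (t i) - x s"
  unfolding err_def using sample_idx_eq by simp

definition inseg :: "nat \<Rightarrow> real \<Rightarrow> bool" where
  "inseg i s \<longleftrightarrow> t i < s \<and> (Suc i \<in> I \<longrightarrow> s < t (Suc i))"

lemma inseg_seg: "inseg i s \<Longrightarrow> s \<in> seg I t i"
  unfolding inseg_def seg_def by auto

lemma inseg_open: "\<exists>U. open U \<and> s \<in> U \<and> U \<subseteq> seg I t i" if "inseg i s"
proof (cases "Suc i \<in> I")
  case True
  thus ?thesis using that unfolding inseg_def seg_def
    by (intro exI[of _ "{t i<..<t (Suc i)}"]) auto
next
  case False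
  thus ?thesis using that unfolding inseg_def seg_def
    by (intro exI[of _ "{t i<..}"]) auto
qed

lemma deriv_at:
  assumes "i \<in> I" "inseg i s"
  shows "(x has_vector_derivative (A *v x s + B *v (K *v x (t i)))) (at s)"
    and "(eta has_real_derivative
           (- lam * eta s + sig * quad Q (x s)
            - 2 * (x s \<bullet> (P *v (B *v (K *v (x (t i) - x s))))))) (at s)"
proof -
  obtain U where U: "open U" "s \<in> U" "U \<subseteq> seg I t i" using inseg_open[OF assms(2)] by blast
  note o = ode[OF assms(1) inseg_seg[OF assms(2)]]
  show "(x has_vector_derivative (A *v x s + B *v (K *v x (t i)))) (at s)"
    using vderiv_at_open[OF conjunct1[OF o] U(3,1,2)] .
  show "(eta has_real_derivative
           (- lam * eta s + sig * quad Q (x s)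
            - 2 * (x s \<bullet> (P *v (B *v (K *v (x (t i) - x s))))))) (at s)"
    using rderiv_at_open[OF conjunct2[OF o] U(3,1,2)] .
qed

lemma x_isCont: "s > 0 \<Longrightarrow> isCont x s"
  using continuous_on_interior[OF xcont] by simp

lemma eta_isCont: "s > 0 \<Longrightarrow> isCont eta s"
  using continuous_on_interior[OF etacont] by simp

lemma x_cont_on: "0 \<le> a \<Longrightarrow> continuous_on {a..b} x"
  by (rule continuous_on_subset[OF xcont]) auto

lemma eta_cont_on: "0 \<le> a \<Longrightarrow> continuous_on {a..b} eta"
  by (rule continuous_on_subset[OF etacont]) auto

lemma lim_err:
  assumes "i \<in> I" "t i < s" "Suc i \<in> I \<longrightarrow> s \<le> t (Suc i)"
  shows "Lim (at_left s) (err I t x) = x (t i) - x s"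
proof (rule tendsto_Lim)
  show "at_left s \<noteq> bot" by simp
  have ev: "eventually (\<lambda>r. r \<in> {t i<..<s}) (at_left s)"
    using eventually_at_left_real[OF assms(2)] .
  have "eventually (\<lambda>r. x (t i) - x r = err I t x r) (at_left s)"
  proof (rule eventually_mono[OF ev])
    fix r assume "r \<in> {t i<..<s}"
    hence "r \<in> seg I t i" using assms(3) unfolding seg_def by auto
    thus "x (t i) - x r = err I t x r" using err_eq[OF assms(1)] by simp
  qed
  moreover have "((\<lambda>r. x (t i) - x r) \<longlongrightarrow> x (t i) - x s) (at_left s)"
  proof -
    have "s > 0" using t_nonneg[OF assms(1)] assms(2) by simp
    hence "(x \<longlongrightarrow> x s) (at s)" using x_isCont isCont_def by blast
    hence "(x \<longlongrightarrow> x s) (at_left s)" by (rule tendsto_mono[rotated]) (simp add: at_le)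
    thus ?thesis by (intro tendsto_intros)
  qed
  ultimately show "(err I t x \<longlongrightarrow> x (t i) - x s) (at_left s)"
    using Lim_transform_eventually by (metis (mono_tags, lifting) eventually_mono)
qed

definition g :: "nat \<Rightarrow> real \<Rightarrow> real" where
  "g i s = sig * quad Q (x s) - 2 * (x s \<bullet> (P *v (B *v (K *v (x (t i) - x s)))))"

lemma trig_iff:
  assumes "i \<in> I" "t i < s" "Suc i \<in> I \<longrightarrow> s \<le> t (Suc i)"
  shows "s \<in> trig_set B K P Q sig th x eta t I j \<longleftrightarrow> t j < s \<and> eta s + th * g i s \<le> 0"
  unfolding trig_set_def g_def using lim_err[OF assms] by simp

lemma not_trig:
  assumes "i \<in> I" "inseg i s"
  shows "eta s + th * g i s > 0"
proof -
  have a3: "Suc i \<in> I \<longrightarrow> s \<le> t (Suc i)" "t i < s" using assms(2) unfolding inseg_def by auto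
  have "s \<notin> trig_set B K P Q sig th x eta t I i"
  proof (cases "Suc i \<in> I")
    case True
    note tn = trig_next[OF assms(1) True]
    have "bdd_below (trig_set B K P Q sig th x eta t I i)"
      unfolding trig_set_def by (rule bdd_belowI[of _ "t i"]) auto
    hence "s \<in> trig_set B K P Q sig th x eta t I i \<Longrightarrow> t (Suc i) \<le> s"
      using tn cInf_lower by metis
    thus ?thesis using assms(2) True unfolding inseg_def by auto
  next
    case False
    thus ?thesis using trig_last[OF assms(1)] by simp
  qed
  thus ?thesis using trig_iff[OF assms(1) a3(2) a3(1), of i] a3 by auto
qed

end



lemma endpoint_nonneg:
  fixes f :: "real \<Rightarrow> real"
  assumes "a < b" "isCont f b" "\<And>s. a < s \<Longrightarrow> s < b \<Longrightarrow> f s \<ge> 0"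
  shows "f b \<ge> 0"
proof (rule tendsto_lowerbound)
  show "(f \<longlongrightarrow> f b) (at_left b)"
    using assms(2) isCont_def tendsto_mono at_le by (metis at_le subset_UNIV)
  show "eventually (\<lambda>s. 0 \<le> f s) (at_left b)"
    using eventually_at_left_real[OF assms(1)] by (rule eventually_mono) (use assms(3) in auto)
qed simp

context es begin

lemma eta_deriv_g:
  assumes "i \<in> I" "inseg i s"
  shows "(eta has_real_derivative (- lam * eta s + g i s)) (at s)"
  using deriv_at(2)[OF assms] unfolding g_def by (simp add: algebra_simps)

lemma eta_int:
  assumes "i \<in> I" "eta (t i) \<ge> 0" "inseg i s"
  shows "eta s \<ge> 0"
proof (cases "th = 0")
  case True
  thus ?thesis using not_trig[OF assms(1,3)] by simp
next
  case False
  hence thp: "th > 0" using th by simp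
  define k where "k = lam + 1 / th"
  have ts: "t i < s" using assms(3) unfolding inseg_def by simp
  have "exp (k * t i) * eta (t i) \<le> exp (k * s) * eta s"
  proof (rule DERIV_nonneg_imp_increasing_open[where f = "\<lambda>r. exp (k * r) * eta r"])
    show "t i \<le> s" using ts by simp
    show "continuous_on {t i..s} (\<lambda>r. exp (k * r) * eta r)"
      by (intro continuous_intros eta_cont_on t_nonneg assms(1))
    fix r assume r: "t i < r" "r < s"
    hence ir: "inseg i r" using assms(3) unfolding inseg_def by auto
    have d: "((\<lambda>r. exp (k * r) * eta r) has_real_derivative
        (exp (k * r) * k * eta r + exp (k * r) * (- lam * eta r + g i r))) (at r)"
      by (rule derivative_eq_intros refl eta_deriv_g[OF assms(1) ir] | simp)+
    have "exp (k * r) * k * eta r + exp (k * r) * (- lam * eta r + g i r)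
          = exp (k * r) * ((eta r + th * g i r) / th)"
      unfolding k_def using thp by (simp add: field_simps)
    moreover have "(eta r + th * g i r) / th > 0" using not_trig[OF assms(1) ir] thp by simp
    ultimately show "\<exists>y. ((\<lambda>r. exp (k * r) * eta r) has_real_derivative y) (at r) \<and> 0 \<le> y"
      using d by (intro exI[of _ "exp (k * r) * k * eta r + exp (k * r) * (- lam * eta r + g i r)"])
        (metis exp_gt_zero less_eq_real_def mult_pos_pos)
  qed
  moreover have "exp (k * t i) * eta (t i) \<ge> 0" using assms(2) by simp
  ultimately have "exp (k * s) * eta s \<ge> 0" by linarith
  thus ?thesis by (simp add: zero_le_mult_iff)
qed

lemma eta_ti: "i \<in> I \<Longrightarrow> eta (t i) \<ge> 0"
proof (induction i)
  case 0 then show ?case using t0 eta0 by simp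
next
  case (Suc i)
  have iI: "i \<in> I" using I_down[OF Suc.prems] by simp
  have lt: "t i < t (Suc i)" using tstep Suc.prems by simp
  show ?case
  proof (rule endpoint_nonneg[OF lt])
    show "isCont eta (t (Suc i))" using eta_isCont t_nonneg[OF iI] lt by simp
    fix s assume "t i < s" "s < t (Suc i)"
    hence "inseg i s" unfolding inseg_def by simp
    thus "eta s \<ge> 0" using eta_int[OF iI Suc.IH[OF iI]] by simp
  qed
qed

lemma eta_seg: "i \<in> I \<Longrightarrow> s \<in> seg I t i \<Longrightarrow> eta s \<ge> 0"
proof -
  assume a: "i \<in> I" "s \<in> seg I t i"
  show "eta s \<ge> 0"
  proof (cases "s = t i")
    case True thus ?thesis using eta_ti a by simp
  next
    case False
    hence "inseg i s" using a seg_ge seg_lt unfolding inseg_def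
      by (metis order_le_less)
    thus ?thesis using eta_int a eta_ti by blast
  qed
qed

end


lemma quad_deriv:
  fixes f :: "real \<Rightarrow> real^'n" and M :: "real^'n^'n"
  assumes "(f has_vector_derivative f') (at r)"
  shows "((\<lambda>r. f r \<bullet> (M *v f r)) has_real_derivative (f' \<bullet> (M *v f r) + f r \<bullet> (M *v f'))) (at r)"
proof -
  have Mf: "((\<lambda>r. M *v f r) has_vector_derivative M *v f') (at r)"
    by (rule bounded_linear.has_vector_derivative[OF _ assms]) simp
  have "((\<lambda>r. f r \<bullet> (M *v f r)) has_derivative
        (\<lambda>h. f r \<bullet> (h *\<^sub>R (M *v f')) + (h *\<^sub>R f') \<bullet> (M *v f r))) (at r)"
    using has_derivative_inner[OF assms[unfolded has_vector_derivative_def] Mf[unfolded has_vector_derivative_def]] .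
  thus ?thesis
    unfolding has_real_derivative_iff_has_vector_derivative has_vector_derivative_def
    by (simp add: algebra_simps)
qed

lemma self_deriv:
  fixes f :: "real \<Rightarrow> real^'n"
  assumes "(f has_vector_derivative f') (at r)"
  shows "((\<lambda>r. f r \<bullet> f r) has_real_derivative 2 * (f r \<bullet> f')) (at r)"
  using quad_deriv[OF assms, of "mat 1"] by (simp add: inner_commute)

lemma mv_cont[continuous_intros]:
  fixes M :: "real^'n^'m"
  shows "continuous F g \<Longrightarrow> continuous F (\<lambda>r. M *v g r)"
  by (rule bounded_linear.continuous[OF matrix_vector_mul_bounded_linear])

definition C0 :: "real \<Rightarrow> real \<Rightarrow> real" where "C0 a b = 2 * exp (2 * a + b)"
definition Lc :: "real \<Rightarrow> real \<Rightarrow> real" where "Lc a b = a * C0 a b + b + 1"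
definition tau :: "real \<Rightarrow> real \<Rightarrow> real \<Rightarrow> real \<Rightarrow> real \<Rightarrow> real" where
  "tau a b p m sig = min 1 (min (1 / (2 * Lc a b)) (sig * m / (8 * p * Lc a b)))"

locale es_c = es +
  fixes ca cb cp cm :: real
  assumes ca: "ca \<ge> 0" "\<forall>v. norm (A *v v) \<le> ca * norm v"
    and cb: "cb \<ge> 0" "\<forall>v. norm (B *v (K *v v)) \<le> cb * norm v"
    and cp: "cp > 0" "\<forall>v. norm (P *v (B *v (K *v v))) \<le> cp * norm v"
    and cm: "cm > 0" "\<forall>v. quad Q v \<ge> cm * norm v ^ 2"
begin

lemma C0_ge: "C0 ca cb \<ge> 1"
proof -
  have "exp (2 * ca + cb) \<ge> 1" using ca(1) cb(1) by simp
  thus ?thesis unfolding C0_def by linarith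
qed

lemma Lc_pos: "Lc ca cb \<ge> 1"
  unfolding Lc_def using ca cb C0_ge by (simp add: add_nonneg_nonneg)

lemma x_growth:
  assumes i: "i \<in> I" and s: "t i \<le> s" "s \<le> t i + 1" "Suc i \<in> I \<longrightarrow> s \<le> t (Suc i)"
  shows "norm (x s) \<le> C0 ca cb * norm (x (t i))"
proof -
  define c where "c = 2 * ca + cb"
  define xi where "xi = x (t i)"
  define G where "G r = exp (- c * (r - t i)) * (x r \<bullet> x r + xi \<bullet> xi)" for r
  have "G s \<le> G (t i)"
  proof (rule DERIV_nonpos_imp_decreasing_open[where f=G and a="t i" and b=s])
    show "t i \<le> s" using s by simp
    show "continuous_on {t i..s} G" unfolding G_def
      by (intro continuous_intros x_cont_on t_nonneg i)
    fix r assume r: "t i < r" "r < s"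
    hence ir: "inseg i r" using s unfolding inseg_def by auto
    let ?v = "A *v x r + B *v (K *v xi)"
    have dx: "(x has_vector_derivative ?v) (at r)" using deriv_at(1)[OF i ir] xi_def by simp
    have dG: "(G has_real_derivative
        (exp (- c * (r - t i)) * (- c) * (x r \<bullet> x r + xi \<bullet> xi)
          + exp (- c * (r - t i)) * (2 * (x r \<bullet> ?v)))) (at r)"
      unfolding G_def
      by (rule derivative_eq_intros refl self_deriv[OF dx] | simp)+
    have b1: "x r \<bullet> (A *v x r) \<le> ca * norm (x r) ^ 2"
    proof -
      have "x r \<bullet> (A *v x r) \<le> norm (x r) * norm (A *v x r)" by (rule norm_cauchy_schwarz)
      also have "\<dots> \<le> norm (x r) * (ca * norm (x r))" using ca by (simp add: mult_left_mono)
      finally show ?thesis by (simp add: power2_eq_square algebra_simps)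
    qed
    have b2: "x r \<bullet> (B *v (K *v xi)) \<le> cb * (norm (x r) ^ 2 + norm xi ^ 2) / 2"
    proof -
      have "x r \<bullet> (B *v (K *v xi)) \<le> norm (x r) * norm (B *v (K *v xi))" by (rule norm_cauchy_schwarz)
      also have "\<dots> \<le> norm (x r) * (cb * norm xi)" using cb by (simp add: mult_left_mono)
      also have "\<dots> \<le> cb * (norm (x r) ^ 2 + norm xi ^ 2) / 2"
      proof -
        have "2 * (norm (x r) * norm xi) \<le> norm (x r) ^ 2 + norm xi ^ 2"
          using sum_squares_bound[of "norm (x r)" "norm xi"] by (simp add: power2_eq_square)
        hence "cb * (2 * (norm (x r) * norm xi)) \<le> cb * (norm (x r) ^ 2 + norm xi ^ 2)"
          using cb by (simp add: mult_left_mono)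
        thus ?thesis by (simp add: algebra_simps)
      qed
      finally show ?thesis .
    qed
    have "2 * (x r \<bullet> ?v) \<le> c * (x r \<bullet> x r + xi \<bullet> xi)"
    proof -
      have "2 * (x r \<bullet> ?v) = 2 * (x r \<bullet> (A *v x r)) + 2 * (x r \<bullet> (B *v (K *v xi)))"
        by (simp add: inner_add_right)
      also have "\<dots> \<le> 2 * ca * norm (x r) ^ 2 + cb * (norm (x r) ^ 2 + norm xi ^ 2)"
        using b1 b2 by simp
      also have "\<dots> \<le> c * (norm (x r) ^ 2 + norm xi ^ 2)"
        unfolding c_def using ca by (simp add: algebra_simps)
      finally show ?thesis by (simp add: power2_norm_eq_inner)
    qed
    hence "exp (- c * (r - t i)) * (- c) * (x r \<bullet> x r + xi \<bullet> xi)
          + exp (- c * (r - t i)) * (2 * (x r \<bullet> ?v)) \<le> 0"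
    proof -
      have "exp (- c * (r - t i)) * (- c) * (x r \<bullet> x r + xi \<bullet> xi)
          + exp (- c * (r - t i)) * (2 * (x r \<bullet> ?v))
          = exp (- c * (r - t i)) * (2 * (x r \<bullet> ?v) - c * (x r \<bullet> x r + xi \<bullet> xi))"
        by (simp add: algebra_simps)
      also have "\<dots> \<le> 0"
        by (rule mult_nonneg_nonpos) (use \<open>2 * (x r \<bullet> ?v) \<le> _\<close> in auto)
      finally show ?thesis .
    qed
    thus "\<exists>y. (G has_real_derivative y) (at r) \<and> y \<le> 0" using dG by blast
  qed
  hence "exp (- c * (s - t i)) * (norm (x s) ^ 2 + norm xi ^ 2) \<le> 2 * norm xi ^ 2"
    unfolding G_def xi_def by (simp add: power2_norm_eq_inner)
  hence h1: "exp (c * (s - t i)) * (exp (- c * (s - t i)) * (norm (x s) ^ 2 + norm xi ^ 2))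
      \<le> exp (c * (s - t i)) * (2 * norm xi ^ 2)"
    by (rule mult_left_mono) simp
  have "exp (c * (s - t i)) * exp (- c * (s - t i)) = 1"
    by (simp add: exp_add[symmetric])
  hence "exp (c * (s - t i)) * (exp (- c * (s - t i)) * (norm (x s) ^ 2 + norm xi ^ 2))
     = norm (x s) ^ 2 + norm xi ^ 2"
    by (metis mult.assoc mult_1)
  hence h2: "norm (x s) ^ 2 + norm xi ^ 2 \<le> exp (c * (s - t i)) * (2 * norm xi ^ 2)"
    using h1 by linarith
  have c0: "c \<ge> 0" unfolding c_def using ca cb by simp
  have "c * (s - t i) \<le> c * 1" using s c0 by (intro mult_left_mono) auto
  hence "exp (c * (s - t i)) \<le> exp c" by simp
  hence "exp (c * (s - t i)) * (2 * norm xi ^ 2) \<le> exp c * (2 * norm xi ^ 2)"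
    by (rule mult_right_mono) simp
  with h2 have "norm (x s) ^ 2 \<le> (2 * exp c) * norm xi ^ 2"
  proof -
    have "exp c * (2 * norm xi ^ 2) = (2 * exp c) * norm xi ^ 2" by simp
    moreover have "norm xi ^ 2 \<ge> 0" by simp
    ultimately show ?thesis using h2 \<open>exp (c * (s - t i)) * (2 * norm xi ^ 2) \<le> _\<close> by linarith
  qed
  also have "\<dots> \<le> (2 * exp c) * (2 * exp c) * norm xi ^ 2"
  proof -
    have "1 \<le> 2 * exp c" using C0_ge unfolding C0_def c_def .
    hence "(2 * exp c) * 1 \<le> (2 * exp c) * (2 * exp c)" by (intro mult_left_mono) auto
    thus ?thesis by (intro mult_right_mono) auto
  qed
  also have "\<dots> = (C0 ca cb * norm xi) ^ 2"
    unfolding C0_def c_def by (simp add: power2_eq_square)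
  finally have "norm (x s) ^ 2 \<le> (C0 ca cb * norm xi) ^ 2" .
  moreover have "0 \<le> C0 ca cb * norm xi" using C0_ge by simp
  ultimately have "norm (x s) \<le> C0 ca cb * norm xi" by (rule power2_le_imp_le)
  thus ?thesis unfolding xi_def .
qed

lemma x_drift:
  assumes i: "i \<in> I" and s: "t i \<le> s" "s \<le> t i + 1" "Suc i \<in> I \<longrightarrow> s \<le> t (Suc i)"
  shows "norm (x s - x (t i)) \<le> Lc ca cb * (s - t i) * norm (x (t i))"
proof (cases "s = t i")
  case True thus ?thesis by simp
next
  case False
  hence lt: "t i < s" using s by simp
  define xi where "xi = x (t i)"
  have der: "(x has_derivative (\<lambda>h. h *\<^sub>R (A *v x r + B *v (K *v xi)))) (at r)"
    if "t i < r" "r < s" for r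
  proof -
    have "inseg i r" using that s unfolding inseg_def by auto
    thus ?thesis using deriv_at(1)[OF i] unfolding has_vector_derivative_def xi_def by blast
  qed
  obtain r where r: "r \<in> {t i<..<s}" and n: "norm (x s - x (t i))
      \<le> norm ((s - t i) *\<^sub>R (A *v x r + B *v (K *v xi)))"
    using mvt_general[OF lt x_cont_on[OF t_nonneg[OF i]] der] by blast
  have xr: "norm (x r) \<le> C0 ca cb * norm xi"
    using x_growth[OF i, of r] r s unfolding xi_def by auto
  have "norm (A *v x r + B *v (K *v xi)) \<le> ca * norm (x r) + cb * norm xi"
    using norm_triangle_ineq[of "A *v x r" "B *v (K *v xi)"] ca cb by (smt (verit))
  also have "\<dots> \<le> ca * (C0 ca cb * norm xi) + cb * norm xi"
    using xr ca by (simp add: mult_left_mono)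
  also have "\<dots> \<le> Lc ca cb * norm xi"
    unfolding Lc_def by (simp add: algebra_simps)
  finally have v: "norm (A *v x r + B *v (K *v xi)) \<le> Lc ca cb * norm xi" .
  have "norm ((s - t i) *\<^sub>R (A *v x r + B *v (K *v xi)))
        = (s - t i) * norm (A *v x r + B *v (K *v xi))" using lt by simp
  also have "\<dots> \<le> (s - t i) * (Lc ca cb * norm xi)" using v lt by (simp add: mult_left_mono)
  finally show ?thesis using n unfolding xi_def by (simp add: algebra_simps)
qed

lemma tau_props:
  shows "tau ca cb cp cm sig > 0" "tau ca cb cp cm sig \<le> 1"
    "Lc ca cb * tau ca cb cp cm sig \<le> 1 / 2"
    "8 * cp * Lc ca cb * tau ca cb cp cm sig \<le> sig * cm"
proof -
  have L: "Lc ca cb > 0" using Lc_pos by simp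
  have sp: "sig * cm / (8 * cp * Lc ca cb) > 0" using sig0 cm cp L by simp
  show "tau ca cb cp cm sig > 0" unfolding tau_def using L sp by simp
  show "tau ca cb cp cm sig \<le> 1" unfolding tau_def by simp
  have "tau ca cb cp cm sig \<le> 1 / (2 * Lc ca cb)" unfolding tau_def by simp
  hence "Lc ca cb * tau ca cb cp cm sig \<le> Lc ca cb * (1 / (2 * Lc ca cb))"
    using L by (intro mult_left_mono) auto
  thus "Lc ca cb * tau ca cb cp cm sig \<le> 1 / 2" using L by simp
  have "tau ca cb cp cm sig \<le> sig * cm / (8 * cp * Lc ca cb)" unfolding tau_def by simp
  hence "(8 * cp * Lc ca cb) * tau ca cb cp cm sig \<le> (8 * cp * Lc ca cb) * (sig * cm / (8 * cp * Lc ca cb))"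
    using L cp by (intro mult_left_mono) auto
  thus "8 * cp * Lc ca cb * tau ca cb cp cm sig \<le> sig * cm" using L cp by simp
qed

lemma g_pos:
  assumes i: "i \<in> I" and s: "t i < s" "s < t i + tau ca cb cp cm sig" "Suc i \<in> I \<longrightarrow> s \<le> t (Suc i)"
  shows "g i s > 0"
proof -
  define h where "h = tau ca cb cp cm sig"
  define L where "L = Lc ca cb"
  define xi where "xi = x (t i)"
  define e where "e = xi - x s"
  note tp = tau_props[folded h_def L_def]
  have Lp: "L > 0" using Lc_pos L_def by simp
  have xi0: "norm xi > 0" using xnz[OF i] xi_def by simp
  have "norm e \<le> L * (s - t i) * norm xi"
    using x_drift[OF i, of s] s tp unfolding e_def xi_def L_def h_def
    by (simp add: norm_minus_commute)
  also have "\<dots> \<le> L * h * norm xi"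
    using s Lp xi0 unfolding h_def by (intro mult_right_mono mult_left_mono) auto
  finally have ne: "norm e \<le> L * h * norm xi" .
  have "norm xi \<le> norm (x s) + norm e" unfolding e_def
    using norm_triangle_ineq[of "x s" "xi - x s"] by simp
  moreover have "L * h * norm xi \<le> norm xi / 2"
    using tp(3) xi0 mult_right_mono[OF tp(3), of "norm xi"] by simp
  ultimately have nx: "norm xi \<le> 2 * norm (x s)" using ne by linarith
  hence nxp: "norm (x s) > 0" using xi0 by linarith
  have "2 * (x s \<bullet> (P *v (B *v (K *v e)))) \<le> 2 * (norm (x s) * (cp * norm e))"
  proof -
    have "x s \<bullet> (P *v (B *v (K *v e))) \<le> norm (x s) * norm (P *v (B *v (K *v e)))"
      by (rule norm_cauchy_schwarz)
    also have "\<dots> \<le> norm (x s) * (cp * norm e)" using cp by (simp add: mult_left_mono)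
    finally show ?thesis by simp
  qed
  also have "\<dots> \<le> 2 * (norm (x s) * (cp * (L * h * norm xi)))"
    using ne cp by (simp add: mult_left_mono)
  also have "\<dots> = norm (x s) * norm xi * (2 * cp * L * h)" by (simp add: algebra_simps)
  also have "\<dots> \<le> norm (x s) * norm xi * (sig * cm / 4)"
    using tp(4) by (intro mult_left_mono) auto
  also have "\<dots> \<le> norm (x s) * (2 * norm (x s)) * (sig * cm / 4)"
    using nx sig0 cm by (intro mult_right_mono mult_left_mono) auto
  also have "\<dots> = sig * cm * norm (x s) ^ 2 / 2" by (simp add: power2_eq_square)
  finally have r: "2 * (x s \<bullet> (P *v (B *v (K *v e)))) \<le> sig * cm * norm (x s) ^ 2 / 2" .
  have q: "sig * quad Q (x s) \<ge> sig * (cm * norm (x s) ^ 2)"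
    using cm sig0 by (simp add: mult_left_mono)
  have "sig * cm * norm (x s) ^ 2 > 0" using sig0 cm nxp by simp
  hence "g i s \<ge> sig * cm * norm (x s) ^ 2 / 2"
    unfolding g_def using r q unfolding e_def xi_def by simp
  thus ?thesis using \<open>sig * cm * norm (x s) ^ 2 > 0\<close> by simp
qed

lemma inter_event:
  assumes i: "i \<in> I" and si: "Suc i \<in> I"
  shows "t (Suc i) - t i \<ge> tau ca cb cp cm sig"
proof (rule ccontr)
  assume nt: "\<not> t (Suc i) - t i \<ge> tau ca cb cp cm sig"
  define T where "T = t (Suc i)"
  define h where "h = tau ca cb cp cm sig"
  have lt: "t i < T" "T < t i + h" using tstep[OF si] nt unfolding T_def h_def by auto
  have Tpos: "T > 0" using t_nonneg[OF i] lt by simp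
  have gpos: "g i s > 0" if "t i < s" "s \<le> T" for s
    using g_pos[OF i that(1)] that lt unfolding T_def h_def by simp
  have etaT: "eta T \<ge> 0" using eta_ti[OF si] T_def by simp
  have phiT: "eta T + th * g i T > 0 \<and> eta T + th * (sig * quad Q (x T)) > 0"
  proof (cases "th = 0")
    case False
    hence thp: "th > 0" using th by simp
    have "quad Q (x T) \<ge> cm * norm (x T) ^ 2" using cm by simp
    moreover have "norm (x T) > 0" using xnz[OF si] T_def by simp
    ultimately have "quad Q (x T) > 0" using cm
      by (smt (verit) mult_pos_pos zero_less_power)
    moreover have "g i T > 0" using gpos lt by simp
    ultimately show ?thesis using thp etaT sig0
      by (smt (verit) mult_pos_pos)
  next
    case True
    define m where "m = (t i + T) / 2"
    have m: "t i < m" "m < T" using lt unfolding m_def by auto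
    have "inseg i m" using m unfolding inseg_def T_def by simp
    hence em: "eta m > 0" using not_trig[OF i] True by simp
    have "exp (lam * m) * eta m \<le> exp (lam * T) * eta T"
    proof (rule DERIV_nonneg_imp_increasing_open[where f = "\<lambda>r. exp (lam * r) * eta r" and a = m and b = T])
      show "m \<le> T" using m by simp
      show "continuous_on {m..T} (\<lambda>r. exp (lam * r) * eta r)"
        using t_nonneg[OF i] m by (intro continuous_intros eta_cont_on) simp
      fix r assume r: "m < r" "r < T"
      hence ir: "inseg i r" using m unfolding inseg_def T_def by auto
      have d: "((\<lambda>r. exp (lam * r) * eta r) has_real_derivative
          (exp (lam * r) * lam * eta r + exp (lam * r) * (- lam * eta r + g i r))) (at r)"
        by (rule derivative_eq_intros refl eta_deriv_g[OF i ir] | simp)+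
      have "exp (lam * r) * lam * eta r + exp (lam * r) * (- lam * eta r + g i r) = exp (lam * r) * g i r"
        by (simp add: algebra_simps)
      moreover have "g i r > 0" using gpos r m by simp
      ultimately show "\<exists>y. ((\<lambda>r. exp (lam * r) * eta r) has_real_derivative y) (at r) \<and> 0 \<le> y"
        using d by (metis exp_gt_zero less_eq_real_def mult_pos_pos)
    qed
    moreover have "exp (lam * m) * eta m > 0" using em by simp
    ultimately have "exp (lam * T) * eta T > 0" by linarith
    hence "eta T > 0" by (simp add: zero_less_mult_iff)
    thus ?thesis using True by simp
  qed
  have phi_le: "eta s + th * g i s > 0" if "t i < s" "s \<le> T" for s
  proof (cases "s = T")
    case True thus ?thesis using phiT by simp
  next
    case False
    hence "inseg i s" using that unfolding inseg_def T_def by simp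
    thus ?thesis using not_trig[OF i] by simp
  qed
  define psi where "psi r = eta r + th * g (Suc i) r" for r
  have psiT: "psi T > 0" using phiT unfolding psi_def g_def T_def by simp
  have "continuous (at T) psi"
    unfolding psi_def g_def quad_def
    using x_isCont[OF Tpos] eta_isCont[OF Tpos] by (intro continuous_intros) auto
  hence "(psi \<longlongrightarrow> psi T) (at T)" by (simp add: isCont_def)
  hence ev1: "eventually (\<lambda>r. psi r > 0) (at T)" using psiT by (rule order_tendstoD(1))
  have ev2: "eventually (\<lambda>r. psi r > 0) (at_right T)"
    using filter_leD[OF at_le[of "{T<..}" UNIV] ev1] by simp
  have ev3: "eventually (\<lambda>r. Suc (Suc i) \<in> I \<longrightarrow> r < t (Suc (Suc i))) (at_right T)"
  proof (cases "Suc (Suc i) \<in> I")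
    case True
    hence "T < t (Suc (Suc i))" using tstep T_def by simp
    from eventually_at_right_real[OF this] show ?thesis by (rule eventually_mono) auto
  next
    case False thus ?thesis by simp
  qed
  obtain bb where bb: "bb > T" and bbp: "\<And>y. T < y \<Longrightarrow> y < bb \<Longrightarrow>
      psi y > 0 \<and> (Suc (Suc i) \<in> I \<longrightarrow> y < t (Suc (Suc i)))"
    using eventually_conj[OF ev2 ev3] unfolding eventually_at_right_field by blast
  have ge: "y \<ge> bb" if y: "y \<in> trig_set B K P Q sig th x eta t I i" for y
  proof (rule ccontr)
    assume nb: "\<not> y \<ge> bb"
    have yti: "t i < y" using y unfolding trig_set_def by simp
    show False
    proof (cases "y \<le> T")
      case True
      have "eta y + th * g i y \<le> 0"
        using trig_iff[OF i yti, of i] y True si unfolding T_def by auto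
      thus False using phi_le[OF yti True] by simp
    next
      case False
      hence yT: "T < y" by simp
      have p: "psi y > 0" "Suc (Suc i) \<in> I \<longrightarrow> y < t (Suc (Suc i))" using bbp[OF yT] nb by auto
      have "eta y + th * g (Suc i) y \<le> 0"
        using trig_iff[OF si, of y i] y yT p(2) unfolding T_def by auto
      thus False using p(1) unfolding psi_def by simp
    qed
  qed
  have "T \<ge> bb" unfolding T_def using trig_next[OF i si] ge by (metis cInf_greatest)
  thus False using bb by simp
qed

end


lemma mv_cont_on[continuous_intros]:
  fixes M :: "real^'n^'m"
  shows "continuous_on S g \<Longrightarrow> continuous_on S (\<lambda>r. M *v g r)"
  by (rule bounded_linear.continuous_on[OF matrix_vector_mul_bounded_linear])

context es begin

lemma quadP_nonneg: "quad P v \<ge> 0"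
  using posP unfolding sym_pos_def_def
  by (cases "v = 0") (auto simp: quad_def intro: less_imp_le)

lemma W_step:
  assumes mu: "0 < mu" "mu \<le> lam" "mu \<le> (1 - sig) * kappa"
    and i: "i \<in> I" and s: "t i \<le> s" "Suc i \<in> I \<longrightarrow> s \<le> t (Suc i)"
  shows "exp (mu * s) * (quad P (x s) + eta s) \<le> exp (mu * t i) * (quad P (x (t i)) + eta (t i))"
proof (rule DERIV_nonpos_imp_decreasing_open[where f = "\<lambda>r. exp (mu * r) * (quad P (x r) + eta r)"
      and a = "t i" and b = s])
  show "t i \<le> s" using s by simp
  show "continuous_on {t i..s} (\<lambda>r. exp (mu * r) * (quad P (x r) + eta r))"
    unfolding quad_def using t_nonneg[OF i]
    by (intro continuous_intros x_cont_on eta_cont_on) simp_all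
  fix r assume r: "t i < r" "r < s"
  hence ir: "inseg i r" using s unfolding inseg_def by auto
  define xi where "xi = x (t i)"
  define v where "v = A *v x r + B *v (K *v xi)"
  define e where "e = xi - x r"
  define F where "F = A + B ** K"
  have dx: "(x has_vector_derivative v) (at r)" using deriv_at(1)[OF i ir] unfolding v_def xi_def .
  have dV: "((\<lambda>r. quad P (x r)) has_real_derivative 2 * (x r \<bullet> (P *v v))) (at r)"
    using quad_deriv[OF dx, of P] inner_sym_mat[OF symP, of v "x r"] unfolding quad_def by simp
  have de: "(eta has_real_derivative (- lam * eta r + g i r)) (at r)" using eta_deriv_g[OF i ir] .
  have vF: "v = F *v x r + B *v (K *v e)"
    unfolding v_def F_def e_def
    by (simp add: matrix_vector_mult_add_rdistrib matrix_vector_mul_assoc[symmetric]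
        matrix_vector_mult_diff_distrib)
  have Vd: "2 * (x r \<bullet> (P *v v)) = - quad Q (x r) + 2 * (x r \<bullet> (P *v (B *v (K *v e))))"
  proof -
    have "2 * (x r \<bullet> (P *v v)) = 2 * (x r \<bullet> (P *v (F *v x r))) + 2 * (x r \<bullet> (P *v (B *v (K *v e))))"
      unfolding vF by (simp add: matrix_vector_right_distrib inner_add_right)
    thus ?thesis using lyap_quad[OF symP lyap[folded F_def], of "x r"] by simp
  qed
  have gd: "g i r = sig * quad Q (x r) - 2 * (x r \<bullet> (P *v (B *v (K *v e))))"
    unfolding g_def e_def xi_def ..
  have d: "((\<lambda>r. exp (mu * r) * (quad P (x r) + eta r)) has_real_derivative
      (exp (mu * r) * mu * (quad P (x r) + eta r) + exp (mu * r) * (2 * (x r \<bullet> (P *v v)) + (- lam * eta r + g i r)))) (at r)"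
    by (rule derivative_eq_intros refl dV de | simp)+
  have eq: "exp (mu * r) * mu * (quad P (x r) + eta r) + exp (mu * r) * (2 * (x r \<bullet> (P *v v)) + (- lam * eta r + g i r))
    = exp (mu * r) * ((mu * quad P (x r) - (1 - sig) * quad Q (x r)) + (mu - lam) * eta r)"
    unfolding Vd gd by (simp add: algebra_simps)
  have etar: "eta r \<ge> 0" using eta_seg[OF i inseg_seg[OF ir]] .
  have "(1 - sig) * quad Q (x r) \<ge> (1 - sig) * (kappa * quad P (x r))"
    using QP sig1 by (simp add: mult_left_mono)
  moreover have "(1 - sig) * (kappa * quad P (x r)) \<ge> mu * quad P (x r)"
    using mu quadP_nonneg[of "x r"] by (simp add: mult.assoc[symmetric] mult_right_mono)
  moreover have "(mu - lam) * eta r \<le> 0" using mu etar by (simp add: mult_nonpos_nonneg)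
  ultimately have "(mu * quad P (x r) - (1 - sig) * quad Q (x r)) + (mu - lam) * eta r \<le> 0" by linarith
  hence le0: "exp (mu * r) * ((mu * quad P (x r) - (1 - sig) * quad Q (x r)) + (mu - lam) * eta r) \<le> 0"
    by (simp add: mult_nonneg_nonpos)
  thus "\<exists>y. ((\<lambda>r. exp (mu * r) * (quad P (x r) + eta r)) has_real_derivative y) (at r) \<and> y \<le> 0"
    using d[unfolded eq] le0 by blast
qed

lemma W_ti:
  assumes mu: "0 < mu" "mu \<le> lam" "mu \<le> (1 - sig) * kappa"
  shows "i \<in> I \<Longrightarrow> exp (mu * t i) * (quad P (x (t i)) + eta (t i)) \<le> quad P (x 0)"
proof (induction i)
  case 0 thus ?case using t0 eta0 by simp
next
  case (Suc i)
  have iI: "i \<in> I" using I_down[OF Suc.prems] by simp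
  have "exp (mu * t (Suc i)) * (quad P (x (t (Suc i))) + eta (t (Suc i)))
     \<le> exp (mu * t i) * (quad P (x (t i)) + eta (t i))"
    using W_step[OF mu iI, of "t (Suc i)"] tstep[OF Suc.prems] by simp
  thus ?case using Suc.IH[OF iI] by simp
qed

lemma W_seg:
  assumes mu: "0 < mu" "mu \<le> lam" "mu \<le> (1 - sig) * kappa"
    and i: "i \<in> I" and s: "s \<in> seg I t i"
  shows "exp (mu * s) * (quad P (x s) + eta s) \<le> quad P (x 0)"
  using W_step[OF mu i, of s] seg_ge[OF s] seg_lt[of i s] s W_ti[OF mu i] by fastforce

end

context es_c begin

lemma t_lin: "i \<in> I \<Longrightarrow> t i \<ge> real i * tau ca cb cp cm sig"
proof (induction i)
  case 0 thus ?case using t0 by simp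
next
  case (Suc i)
  have iI: "i \<in> I" using I_down[OF Suc.prems] by simp
  thus ?case using Suc.IH inter_event[OF iI Suc.prems] by (simp add: algebra_simps)
qed

lemma cover:
  assumes "s \<ge> 0" shows "\<exists>i\<in>I. s \<in> seg I t i"
proof (cases "\<exists>j\<in>I. s < t j")
  case True
  define j where "j = (LEAST j. j \<in> I \<and> s < t j)"
  have j: "j \<in> I" "s < t j" using LeastI_ex[of "\<lambda>j. j \<in> I \<and> s < t j"] True unfolding j_def by auto
  have jmin: "\<And>k. k < j \<Longrightarrow> \<not> (k \<in> I \<and> s < t k)"
    unfolding j_def using not_less_Least by blast
  have "j \<noteq> 0" using j t0 assms by (metis not_less)
  then obtain k where k: "j = Suc k" by (cases j) auto
  have kI: "k \<in> I" using I_down[OF j(1)] k by simp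
  have "t k \<le> s" using jmin[of k] kI k by auto
  hence "s \<in> seg I t k" using j k unfolding seg_def by auto
  thus ?thesis using kI by blast
next
  case False
  have "\<exists>N. I = {0..N}"
  proof (rule ccontr)
    assume "\<not> (\<exists>N. I = {0..N})"
    hence U: "I = UNIV" using I_form by blast
    have tp: "tau ca cb cp cm sig > 0" using tau_props by simp
    obtain n :: nat where "s / tau ca cb cp cm sig < real n" using reals_Archimedean2 by blast
    hence "s < real n * tau ca cb cp cm sig" using tp by (simp add: field_simps)
    also have "\<dots> \<le> t n" using t_lin U by simp
    finally show False using False U by auto
  qed
  then obtain N where N: "I = {0..N}" by blast
  have "t N \<le> s" using False N by (metis atLeastAtMost_iff le0 le_refl not_less)
  hence "s \<in> seg I t N" using N unfolding seg_def by auto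
  thus ?thesis using N by auto
qed

lemma W_all:
  assumes mu: "0 < mu" "mu \<le> lam" "mu \<le> (1 - sig) * kappa" and s: "s \<ge> 0"
  shows "quad P (x s) + eta s \<le> quad P (x 0) * exp (- mu * s)"
proof -
  obtain i where "i \<in> I" "s \<in> seg I t i" using cover[OF s] by blast
  hence "exp (mu * s) * (quad P (x s) + eta s) \<le> quad P (x 0)" using W_seg[OF mu] by blast
  hence A: "exp (- mu * s) * (exp (mu * s) * (quad P (x s) + eta s)) \<le> exp (- mu * s) * quad P (x 0)"
    by (rule mult_left_mono) simp
  have "exp (- mu * s) * exp (mu * s) = 1" by (simp add: exp_add[symmetric])
  hence B: "exp (- mu * s) * (exp (mu * s) * (quad P (x s) + eta s)) = quad P (x s) + eta s"
    by (metis mult.assoc mult_1)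
  have "quad P (x s) + eta s \<le> exp (- mu * s) * quad P (x 0)" using A B by linarith
  thus ?thesis by (simp only: mult.commute)
qed

lemma eta_all: "s \<ge> 0 \<Longrightarrow> eta s \<ge> 0"
  using cover eta_seg by blast

lemma convergence:
  assumes mP: "mP > 0" "\<forall>v. quad P v \<ge> mP * norm v ^ 2"
  shows "(x \<longlongrightarrow> 0) at_top \<and> (eta \<longlongrightarrow> 0) at_top"
proof -
  define mu where "mu = min lam ((1 - sig) * kappa)"
  have mu: "0 < mu" "mu \<le> lam" "mu \<le> (1 - sig) * kappa" using lam sig1 kappa by (auto simp: mu_def)
  define V0 where "V0 = quad P (x 0)"
  have lim: "((\<lambda>s. V0 * exp (- mu * s)) \<longlongrightarrow> 0) at_top" using mu(1) by real_asymp
  have ev: "eventually (\<lambda>s::real. s \<ge> 0) at_top" using eventually_ge_at_top[of "0::real"] .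
  have bnd: "quad P (x s) \<le> V0 * exp (- mu * s) \<and> eta s \<le> V0 * exp (- mu * s) \<and> eta s \<ge> 0"
    if "s \<ge> 0" for s
    using W_all[OF mu that] quadP_nonneg[of "x s"] eta_all[OF that] unfolding V0_def by simp
  have eta: "(eta \<longlongrightarrow> 0) at_top"
  proof (rule tendsto_sandwich[OF _ _ tendsto_const lim])
    show "eventually (\<lambda>s. 0 \<le> eta s) at_top" using ev by (rule eventually_mono) (use bnd in auto)
    show "eventually (\<lambda>s. eta s \<le> V0 * exp (- mu * s)) at_top"
      using ev by (rule eventually_mono) (use bnd in auto)
  qed
  have lim1: "((\<lambda>s. V0 / mP * exp (- mu * s)) \<longlongrightarrow> 0) at_top" using mu(1) by real_asymp
  have lim2: "((\<lambda>s. sqrt (V0 / mP * exp (- mu * s))) \<longlongrightarrow> 0) at_top"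
    using tendsto_real_sqrt[OF lim1] by simp
  have "eventually (\<lambda>s. norm (x s) \<le> sqrt (V0 / mP * exp (- mu * s))) at_top"
    using ev
  proof (rule eventually_mono)
    fix s :: real assume s: "s \<ge> 0"
    have "mP * norm (x s) ^ 2 \<le> V0 * exp (- mu * s)" using mP bnd[OF s] by (meson order_trans)
    hence "norm (x s) ^ 2 \<le> V0 / mP * exp (- mu * s)" using mP by (simp add: field_simps)
    thus "norm (x s) \<le> sqrt (V0 / mP * exp (- mu * s))" by (rule real_le_rsqrt)
  qed
  hence "(x \<longlongrightarrow> 0) at_top" using lim2 by (rule Lim_null_comparison)
  thus ?thesis using eta by simp
qed

lemma exact_rate:
  assumes "lam = (1 - sig) * kappa" "s \<ge> 0"
  shows "quad P (x s) \<le> quad P (x 0) * exp ((sig - 1) * kappa * s)"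
proof -
  have mu: "0 < lam" "lam \<le> lam" "lam \<le> (1 - sig) * kappa" using lam assms by auto
  have "quad P (x s) + eta s \<le> quad P (x 0) * exp (- lam * s)" using W_all[OF mu assms(2)] .
  moreover have "- lam * s = (sig - 1) * kappa * s" unfolding assms(1) by (simp add: algebra_simps)
  ultimately show ?thesis using eta_all[OF assms(2)] by simp
qed

end

theorem theorem2:
  fixes A :: "real^'n^'n" and B :: "real^'m^'n" and K :: "real^'n^'m"
    and P Q :: "real^'n^'n" and kappa lam sig th :: real
  assumes "hurwitz (A + B ** K)"
    and "sym_pos_def P" and "sym_pos_def Q"
    and "transpose (A + B ** K) ** P + P ** (A + B ** K) = - Q"
    and "kappa > 0" and "\<forall>v. quad Q v \<ge> kappa * quad P v"
    and "lam > 0" and "0 < sig" and "sig < 1" and "th \<ge> 0"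
  shows "(\<exists>tau>0. \<forall>x eta t I. event_solution A B K P Q lam sig th x eta t I \<longrightarrow>
            (\<forall>i. i \<in> I \<and> Suc i \<in> I \<longrightarrow> t (Suc i) - t i \<ge> tau))
       \<and> (\<forall>x eta t I. event_solution A B K P Q lam sig th x eta t I \<longrightarrow>
            (x \<longlongrightarrow> 0) at_top \<and> (eta \<longlongrightarrow> 0) at_top)
       \<and> (lam = (1 - sig) * kappa \<longrightarrow>
            (\<forall>x eta t I. event_solution A B K P Q lam sig th x eta t I \<longrightarrow>
              (\<forall>s\<ge>0. quad P (x s) \<le> quad P (x 0) * exp ((sig - 1) * kappa * s))))"
proof -
  have symP: "transpose P = P" using assms(2) unfolding sym_pos_def_def by simp
  obtain ca where ca: "ca > 0" "\<forall>v. norm (A *v v) \<le> ca * norm v" using mat_bound by blast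
  obtain cb where cb: "cb > 0" "\<forall>v. norm ((B ** K) *v v) \<le> cb * norm v" using mat_bound by blast
  obtain cp where cp: "cp > 0" "\<forall>v. norm ((P ** (B ** K)) *v v) \<le> cp * norm v" using mat_bound by blast
  obtain cm where cm: "cm > 0" "\<forall>v. quad Q v \<ge> cm * norm v ^ 2" using quad_lower[OF assms(3)] by blast
  obtain mP where mP: "mP > 0" "\<forall>v. quad P v \<ge> mP * norm v ^ 2" using quad_lower[OF assms(2)] by blast
  have cb': "\<forall>v. norm (B *v (K *v v)) \<le> cb * norm v" using cb by (simp add: matrix_vector_mul_assoc)
  have cp': "\<forall>v. norm (P *v (B *v (K *v v))) \<le> cp * norm v" using cp by (simp add: matrix_vector_mul_assoc)
  have inst: "es_c A B K P Q kappa lam sig th x eta t I ca cb cp cm"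
    if "event_solution A B K P Q lam sig th x eta t I" for x eta t I
    by unfold_locales (use assms symP ca cb cp cb' cp' cm that in auto)
  define tt where "tt = tau ca cb cp cm sig"
  have ttpos: "tt > 0"
  proof -
    have "C0 ca cb > 0" unfolding C0_def by simp
    hence L: "Lc ca cb > 0" unfolding Lc_def using ca cb by (simp add: add_pos_pos)
    thus ?thesis unfolding tt_def tau_def using cp cm assms(8) by simp
  qed
  have p1: "\<forall>x eta t I. event_solution A B K P Q lam sig th x eta t I \<longrightarrow>
            (\<forall>i. i \<in> I \<and> Suc i \<in> I \<longrightarrow> t (Suc i) - t i \<ge> tt)"
    using es_c.inter_event[OF inst] unfolding tt_def by blast
  have p2: "\<forall>x eta t I. event_solution A B K P Q lam sig th x eta t I \<longrightarrow>
            (x \<longlongrightarrow> 0) at_top \<and> (eta \<longlongrightarrow> 0) at_top"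
    using es_c.convergence[OF inst mP] by blast
  have p3: "lam = (1 - sig) * kappa \<longrightarrow>
            (\<forall>x eta t I. event_solution A B K P Q lam sig th x eta t I \<longrightarrow>
              (\<forall>s\<ge>0. quad P (x s) \<le> quad P (x 0) * exp ((sig - 1) * kappa * s)))"
    using es_c.exact_rate[OF inst] by blast
  show ?thesis using p1 p2 p3 ttpos by blast
qed

end
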